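(* Let $G$ be a graph and $S,T\subseteq V(G)$. Let $X=\partial(S)\cup(T\cap S)$ and let $H$ be a graph with $X\subseteq V(H)$ and $V(H)\cap(V(G)\setminus S)=\emptyset$ such that $B_H(X)=B_{G[S]}(X)$. Let $G'$ be the graph obtained from $G$ by replacing $G[S]$ with $H$ (that is, $V(G')=(V(G)\setminus S)\cup V(H)$ and $E(G')$ consists of the edges of $G$ not having both endpoints in $S$ together with $E(H)$). Then $B_G(T)=B_{G'}(T)$.
   Context: $\partial(S)$ is the set of vertices of $S$ having at least one neighbor in $V(G)\setminus S$. For a graph $Y$ and $Z\subseteq V(Y)$, $B_Y(Z)$ is the set of subsets $Z'\subseteq Z$ such that there is a bipartition of $Y$ (proper $2$-coloring) with all of $Z'$ in one part and all of $Z\setminus Z'$ in the other; $B_Y(Z)=\emptyset$ if $Y$ is not bipartite. *)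

theory Defs
  imports Main
begin

definition graph :: "'a set \<Rightarrow> 'a set set \<Rightarrow> bool" where
  "graph V E \<longleftrightarrow> finite V \<and> (\<forall>e\<in>E. \<exists>u v. e = {u, v} \<and> u \<noteq> v \<and> u \<in> V \<and> v \<in> V)"

definition boundary :: "'a set \<Rightarrow> 'a set set \<Rightarrow> 'a set \<Rightarrow> 'a set" where
  "boundary V E S = {v \<in> S. \<exists>u \<in> V - S. {u, v} \<in> E}"

definition induced_edges :: "'a set set \<Rightarrow> 'a set \<Rightarrow> 'a set set" where
  "induced_edges E S = {e \<in> E. e \<subseteq> S}"

definition is_bipartition :: "'a set \<Rightarrow> 'a set set \<Rightarrow> 'a set \<Rightarrow> bool" where
  "is_bipartition V E A \<longleftrightarrow> A \<subseteq> V \<and> (\<forall>u v. {u, v} \<in> E \<longrightarrow> (u \<in> A \<longleftrightarrow> v \<notin> A))"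

definition Bsets :: "'a set \<Rightarrow> 'a set set \<Rightarrow> 'a set \<Rightarrow> 'a set set" where
  "Bsets V E Z = {Z'. Z' \<subseteq> Z \<and> (\<exists>A. is_bipartition V E A \<and>
      ((Z' \<subseteq> A \<and> Z - Z' \<subseteq> V - A) \<or> (Z' \<subseteq> V - A \<and> Z - Z' \<subseteq> A)))}"

end

theory Submission
  imports Defs
begin

lemma Bsets_char:
  assumes "Z \<subseteq> V" and "\<forall>e\<in>E. e \<subseteq> V"
  shows "Z' \<in> Bsets V E Z \<longleftrightarrow> Z' \<subseteq> Z \<and> (\<exists>A. is_bipartition V E A \<and> A \<inter> Z = Z')"
proof
  assume "Z' \<in> Bsets V E Z"
  then obtain A where Z': "Z' \<subseteq> Z" and A: "is_bipartition V E A"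
    and c: "(Z' \<subseteq> A \<and> Z - Z' \<subseteq> V - A) \<or> (Z' \<subseteq> V - A \<and> Z - Z' \<subseteq> A)"
    unfolding Bsets_def by blast
  show "Z' \<subseteq> Z \<and> (\<exists>A. is_bipartition V E A \<and> A \<inter> Z = Z')"
  proof (cases "Z' \<subseteq> A \<and> Z - Z' \<subseteq> V - A")
    case True
    then have "A \<inter> Z = Z'" using Z' by blast
    then show ?thesis using A Z' by blast
  next
    case False
    then have c2: "Z' \<subseteq> V - A \<and> Z - Z' \<subseteq> A" using c by blast
    have "is_bipartition V E (V - A)"
      using A assms(2) unfolding is_bipartition_def by blast
    moreover have "(V - A) \<inter> Z = Z'" using c2 Z' assms(1) by blast
    ultimately show ?thesis using Z' by blast
  qed
next
  assume "Z' \<subseteq> Z \<and> (\<exists>A. is_bipartition V E A \<and> A \<inter> Z = Z')"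
  then obtain A where "Z' \<subseteq> Z" "is_bipartition V E A" "A \<inter> Z = Z'" by blast
  then show "Z' \<in> Bsets V E Z" unfolding Bsets_def using assms(1) by blast
qed

lemma graph_edges: "graph V E \<Longrightarrow> \<forall>e\<in>E. e \<subseteq> V"
  unfolding graph_def by auto

lemma graph_edge_in: "graph V E \<Longrightarrow> {u, v} \<in> E \<Longrightarrow> u \<in> V \<and> v \<in> V"
  using graph_edges by (metis insert_subset)

lemma bip_edge: "is_bipartition V E A \<Longrightarrow> {u, v} \<in> E \<Longrightarrow> (u \<in> A \<longleftrightarrow> v \<notin> A)"
  unfolding is_bipartition_def by blast

theorem lemma5p6:
  fixes V VH :: "'a set" and E EH :: "'a set set" and S T X :: "'a set"
  assumes "graph V E"
    and "S \<subseteq> V" and "T \<subseteq> V"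
    and "X = boundary V E S \<union> (T \<inter> S)"
    and "graph VH EH"
    and "X \<subseteq> VH"
    and "VH \<inter> (V - S) = {}"
    and "Bsets VH EH X = Bsets S (induced_edges E S) X"
  shows "Bsets V E T = Bsets ((V - S) \<union> VH) ({e \<in> E. \<not> e \<subseteq> S} \<union> EH) T"
proof -
  let ?V' = "(V - S) \<union> VH" and ?E' = "{e \<in> E. \<not> e \<subseteq> S} \<union> EH"
  have XS: "X \<subseteq> S"
  proof -
    have "boundary V E S \<subseteq> S" unfolding boundary_def by auto
    then show ?thesis using assms(4) by auto
  qed
  have TV': "T \<subseteq> ?V'"
  proof
    fix x assume x: "x \<in> T"
    show "x \<in> ?V'"
    proof (cases "x \<in> S")
      case True
      then have "x \<in> X" using x assms(4) by simp
      then show ?thesis using assms(6) by auto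
    next
      case False
      then show ?thesis using x assms(3) by auto
    qed
  qed
  have EV: "\<forall>e\<in>E. e \<subseteq> V" using graph_edges[OF assms(1)] .
  have EHV: "\<forall>e\<in>EH. e \<subseteq> VH" using graph_edges[OF assms(5)] .
  have IS: "\<forall>e\<in>induced_edges E S. e \<subseteq> S" unfolding induced_edges_def by auto
  have bnd: "u \<in> X" if "{u, v} \<in> E" "u \<in> S" "v \<notin> S" for u v
  proof -
    have "v \<in> V" using graph_edge_in[OF assms(1) that(1)] by simp
    then have vV: "v \<in> V - S" using that(3) by simp
    have "{v, u} \<in> E" using that(1) by (simp add: insert_commute)
    then have "u \<in> boundary V E S" unfolding boundary_def using vV that(2) by blast
    then show ?thesis using assms(4) by simp
  qed
  have E'V: "\<forall>e\<in>?E'. e \<subseteq> ?V'"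
  proof
    fix e assume e: "e \<in> ?E'"
    show "e \<subseteq> ?V'"
    proof (cases "e \<in> EH")
      case True
      then show ?thesis using EHV by blast
    next
      case False
      then have eE: "e \<in> E" and ns: "\<not> e \<subseteq> S" using e by auto
      obtain a b where ab: "e = {a, b}" "a \<in> V" "b \<in> V"
        using assms(1) eE unfolding graph_def by blast
      have ba: "{b, a} \<in> E" using eE ab(1) by (simp add: insert_commute)
      have "a \<in> ?V'"
      proof (cases "a \<in> S")
        case True
        then have "b \<notin> S" using ns ab(1) by simp
        then have "a \<in> X" using bnd[of a b] eE ab(1) True by simp
        then show ?thesis using assms(6) by auto
      qed (use ab in auto)
      moreover have "b \<in> ?V'"
      proof (cases "b \<in> S")
        case True
        then have "a \<notin> S" using ns ab(1) by simp
        then have "b \<in> X" using bnd[of b a] ba True by simp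
        then show ?thesis using assms(6) by auto
      qed (use ab in auto)
      ultimately show ?thesis using ab(1) by simp
    qed
  qed
  have BH: "Y \<subseteq> X \<and> (\<exists>B. is_bipartition VH EH B \<and> B \<inter> X = Y) \<longleftrightarrow>
            Y \<subseteq> X \<and> (\<exists>C. is_bipartition S (induced_edges E S) C \<and> C \<inter> X = Y)" for Y
  proof -
    have "Y \<in> Bsets VH EH X \<longleftrightarrow> Y \<in> Bsets S (induced_edges E S) X" using assms(8) by simp
    then show ?thesis unfolding Bsets_char[OF assms(6) EHV] Bsets_char[OF XS IS] .
  qed
  show ?thesis
  proof (rule set_eqI)
    fix Z'
    show "Z' \<in> Bsets V E T \<longleftrightarrow> Z' \<in> Bsets ?V' ?E' T"
      unfolding Bsets_char[OF assms(3) EV] Bsets_char[OF TV' E'V]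
    proof safe
      fix A assume Z': "A \<inter> T \<subseteq> T" and A: "is_bipartition V E A"
      have "is_bipartition S (induced_edges E S) (A \<inter> S)"
        unfolding is_bipartition_def
      proof (intro conjI allI impI)
        fix u v assume "{u, v} \<in> induced_edges E S"
        then have uv: "{u, v} \<in> E" "u \<in> S" "v \<in> S" unfolding induced_edges_def by auto
        then have "u \<in> A \<longleftrightarrow> v \<notin> A" using A unfolding is_bipartition_def by simp
        then show "u \<in> A \<inter> S \<longleftrightarrow> v \<notin> A \<inter> S" using uv by simp
      qed simp
      moreover have "(A \<inter> S) \<inter> X = A \<inter> X" using XS by blast
      ultimately have F: "A \<inter> X \<subseteq> X \<and> (\<exists>C. is_bipartition S (induced_edges E S) C \<and> C \<inter> X = A \<inter> X)"
        by (metis inf_le2)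
      have "A \<inter> X \<subseteq> X \<and> (\<exists>B. is_bipartition VH EH B \<and> B \<inter> X = A \<inter> X)"
        by (rule iffD2[OF BH F])
      then obtain B where B: "is_bipartition VH EH B" and BX: "B \<inter> X = A \<inter> X"
        by blast
      define A' where "A' = (A - S) \<union> B"
      have AV: "A \<subseteq> V" and BV: "B \<subseteq> VH" using A B unfolding is_bipartition_def by auto
      have "is_bipartition ?V' ?E' A'"
        unfolding is_bipartition_def
      proof (intro conjI allI)
        show "A' \<subseteq> ?V'" using AV BV unfolding A'_def by blast
      next
        fix u v
        show "{u, v} \<in> ?E' \<longrightarrow> (u \<in> A' \<longleftrightarrow> v \<notin> A')"
        proof
        assume e: "{u, v} \<in> ?E'"
        show "(u \<in> A' \<longleftrightarrow> v \<notin> A')"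
        proof (cases "{u, v} \<in> EH")
          case True
          have "u \<in> VH" "v \<in> VH" using graph_edge_in[OF assms(5) True] by auto
          then have "u \<in> A' \<longleftrightarrow> u \<in> B" "v \<in> A' \<longleftrightarrow> v \<in> B"
            using assms(7) AV A'_def by blast+
          then show ?thesis using B True unfolding is_bipartition_def by blast
        next
          case False
          then have eE: "{u, v} \<in> E" and ns: "\<not> {u, v} \<subseteq> S" using e by auto
          have uv: "u \<in> V" "v \<in> V" using graph_edge_in[OF assms(1) eE] by auto
          have eE2: "{v, u} \<in> E" using eE by (simp add: insert_commute)
          have gen: "x \<in> A' \<longleftrightarrow> x \<in> A" if "x \<in> V" "x \<notin> S \<or> x \<in> X" for x
          proof (cases "x \<in> S")
            case True
            then have "x \<in> X" using that by blast
            then show ?thesis using True BX A'_def by blast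
          next
            case False
            then have "x \<notin> VH" using assms(7) that(1) by blast
            then show ?thesis using False BV A'_def by blast
          qed
          have "u \<notin> S \<or> u \<in> X" using bnd[OF eE] ns by blast
          then have gu: "u \<in> A' \<longleftrightarrow> u \<in> A" using gen uv by blast
          have "v \<notin> S \<or> v \<in> X" using bnd[OF eE2] ns by blast
          then have gv: "v \<in> A' \<longleftrightarrow> v \<in> A" using gen uv by blast
          have "u \<in> A \<longleftrightarrow> v \<notin> A" using A eE unfolding is_bipartition_def by blast
          then show ?thesis using gu gv by simp
        qed
        qed
      qed
      moreover have "A' \<inter> T = A \<inter> T"
      proof (rule set_eqI)
        fix x
        show "x \<in> A' \<inter> T \<longleftrightarrow> x \<in> A \<inter> T"
        proof (cases "x \<in> T \<and> x \<in> S")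
          case True
          then have "x \<in> X" using assms(4) by blast
          then show ?thesis using True BX A'_def by blast
        next
          case False
          moreover have "x \<in> T \<Longrightarrow> x \<notin> VH" using False assms(3,7) by blast
          ultimately show ?thesis using BV A'_def by blast
        qed
      qed
      ultimately show "\<exists>A'. is_bipartition ?V' ?E' A' \<and> A' \<inter> T = A \<inter> T" by blast
    next
      fix A' assume Z': "A' \<inter> T \<subseteq> T" and A': "is_bipartition ?V' ?E' A'"
      have "is_bipartition VH EH (A' \<inter> VH)"
        unfolding is_bipartition_def
      proof (intro conjI allI impI)
        fix u v assume uvH: "{u, v} \<in> EH"
        then have uv: "u \<in> VH" "v \<in> VH" using graph_edge_in[OF assms(5)] by auto
        have "{u, v} \<in> ?E'" using uvH by simp
        then have "u \<in> A' \<longleftrightarrow> v \<notin> A'" by (rule bip_edge[OF A'])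
        then show "u \<in> A' \<inter> VH \<longleftrightarrow> v \<notin> A' \<inter> VH" using uv by simp
      qed simp
      moreover have "(A' \<inter> VH) \<inter> X = A' \<inter> X" using assms(6) by blast
      ultimately have F: "A' \<inter> X \<subseteq> X \<and> (\<exists>B. is_bipartition VH EH B \<and> B \<inter> X = A' \<inter> X)"
        by (metis inf_le2)
      have "A' \<inter> X \<subseteq> X \<and> (\<exists>C. is_bipartition S (induced_edges E S) C \<and> C \<inter> X = A' \<inter> X)"
        by (rule iffD1[OF BH F])
      then obtain C where C: "is_bipartition S (induced_edges E S) C" and CX: "C \<inter> X = A' \<inter> X"
        by blast
      define A where "A = (A' - VH) \<union> C"
      have AV: "A' \<subseteq> ?V'" and CS: "C \<subseteq> S" using A' C unfolding is_bipartition_def by auto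
      have "is_bipartition V E A"
        unfolding is_bipartition_def
      proof (intro conjI allI)
        show "A \<subseteq> V" using AV CS assms(2) assms(7) unfolding A_def by blast
      next
        fix u v
        show "{u, v} \<in> E \<longrightarrow> (u \<in> A \<longleftrightarrow> v \<notin> A)"
        proof
        assume eE: "{u, v} \<in> E"
        show "(u \<in> A \<longleftrightarrow> v \<notin> A)"
        proof (cases "{u, v} \<subseteq> S")
          case True
          then have "{u, v} \<in> induced_edges E S" using eE unfolding induced_edges_def by blast
          moreover have "u \<in> A \<longleftrightarrow> u \<in> C" "v \<in> A \<longleftrightarrow> v \<in> C"
            using True AV A_def by blast+
          ultimately show ?thesis using C unfolding is_bipartition_def by blast
        next
          case False
          then have e': "{u, v} \<in> ?E'" using eE by blast
          have uv: "u \<in> V" "v \<in> V" using graph_edge_in[OF assms(1) eE] by auto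
          have eE2: "{v, u} \<in> E" using eE by (simp add: insert_commute)
          have gen: "x \<in> A \<longleftrightarrow> x \<in> A'" if "x \<in> V" "x \<notin> S \<or> x \<in> X" for x
          proof (cases "x \<in> S")
            case True
            then have "x \<in> X" using that by blast
            then show ?thesis using True CX assms(6) A_def by blast
          next
            case False
            then have "x \<notin> VH" using assms(7) that(1) by blast
            then show ?thesis using False CS A_def by blast
          qed
          have "u \<notin> S \<or> u \<in> X" using bnd[OF eE] False by blast
          then have gu: "u \<in> A \<longleftrightarrow> u \<in> A'" using gen uv by blast
          have "v \<notin> S \<or> v \<in> X" using bnd[OF eE2] False by blast
          then have gv: "v \<in> A \<longleftrightarrow> v \<in> A'" using gen uv by blast
          have "u \<in> A' \<longleftrightarrow> v \<notin> A'" using A' e' unfolding is_bipartition_def by blast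
          then show ?thesis using gu gv by simp
        qed
        qed
      qed
      moreover have "A \<inter> T = A' \<inter> T"
      proof (rule set_eqI)
        fix x
        show "x \<in> A \<inter> T \<longleftrightarrow> x \<in> A' \<inter> T"
        proof (cases "x \<in> T \<and> x \<in> S")
          case True
          then have "x \<in> X" using assms(4) by blast
          then show ?thesis using True CX assms(6) A_def by blast
        next
          case False
          moreover have "x \<in> T \<Longrightarrow> x \<notin> VH" using False assms(3,7) by blast
          ultimately show ?thesis using CS A_def by blast
        qed
      qed
      ultimately show "\<exists>A. is_bipartition V E A \<and> A \<inter> T = A' \<inter> T" by blast
    qed
  qed
qed

end
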